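(* Define, for $z=(p,\tilde\theta)\in\mathbb{R}^n\times\mathbb{R}^{|\mathcal E|}$ and $\sigma=(\lambda,\eta,\nu)\in\mathbb{R}\times\mathbb{R}^{2|\mathcal E|}\times\mathbb{R}^n$, \[ \hat L(z,\sigma)=\sum_{j=1}^n J_j(p_j)-\tfrac12\nu^TD\nu+\nu^T(p-d-CB\tilde\theta)-\lambda\mathbf 1^T(p-d)+\eta^T\big(H^T(p-d)-F\big), \] and the closed-loop system \[ T^z\dot z=-\nabla_z\hat L(z,\sigma),\qquad T^\sigma\dot\sigma=\big[\nabla_\sigma\hat L(z,\sigma)\big]^+_\eta, \] where $T^z,T^\sigma$ are diagonal matrices with positive diagonal entries and the projection acts only on the $\eta$-components. Let $(z^*,\sigma^* )$, with $\eta^*\ge0$, be an equilibrium of this system. If a trajectory $(z(t),\sigma(t))$ of the system with $\eta(0)\ge0$ satisfies $\hat L(z^*,\sigma(t))\equiv\hat L(z^*,\sigma^* )$ and $\hat L(z(t),\sigma^* )\equiv\hat L(z^*,\sigma^* )$ for all $t\ge0$, then $\dot z\equiv0$ and $\dot\sigma\equiv0$.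
   Context: $(\mathcal N,\mathcal E)$ is a connected directed graph with $\mathcal N=\{1,\dots,n\}$; $C$ is its incidence matrix ($C_{j,e}=1$ if $e=(j,k)$, $-1$ if $e=(k,j)$, $0$ otherwise). $B$ and $D$ are diagonal with positive diagonal entries. $L:=CBC^T$, $H\in\mathbb{R}^{n\times 2|\mathcal E|}$ with $H^T=\begin{bmatrix} BC^TL^\dagger\\ -BC^TL^\dagger\end{bmatrix}$ ($L^\dagger$ Moore–Penrose inverse), $F=\begin{bmatrix}\overline F\\-\underline F\end{bmatrix}\in\mathbb{R}^{2|\mathcal E|}$, $d\in\mathbb{R}^n$. Each $J_j:\mathbb{R}\to\mathbb{R}$ is strictly convex and twice differentiable. Projection: for vectors $y,u$ of equal length, $([y]^+_u)_j=y_j$ if $y_j>0$ or $u_j>0$, and $0$ otherwise; here $[\cdot]^+_\eta$ is applied to the $\eta$-block of the gradient with $u=\eta$, other blocks unchanged. (This system models generators' quantity-bidding gradient play, market pricing dynamics, and linearized swing dynamics with $\omega\equiv\nu$.) *)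

theory Defs
  imports "HOL-Analysis.Analysis"
begin

definition simple_digraph :: "('e \<Rightarrow> 'n) \<Rightarrow> ('e \<Rightarrow> 'n) \<Rightarrow> bool" where
  "simple_digraph src tgt \<longleftrightarrow> (\<forall>e. src e \<noteq> tgt e) \<and> inj (\<lambda>e. (src e, tgt e))"

definition connected_digraph :: "('e \<Rightarrow> 'n) \<Rightarrow> ('e \<Rightarrow> 'n) \<Rightarrow> bool" where
  "connected_digraph src tgt \<longleftrightarrow>
     (\<forall>i j. (i, j) \<in> ({(src e, tgt e) | e. True} \<union> {(tgt e, src e) | e. True})\<^sup>*)"

definition incidence :: "('e \<Rightarrow> 'n) \<Rightarrow> ('e \<Rightarrow> 'n) \<Rightarrow> real^'e^'n" where
  "incidence src tgt = (\<chi> j e. if src e = j then 1 else if tgt e = j then -1 else 0)"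

definition is_diag :: "real^'a^'a \<Rightarrow> bool" where
  "is_diag A \<longleftrightarrow> (\<forall>i j. i \<noteq> j \<longrightarrow> A $ i $ j = 0)"

definition pos_diag :: "real^'a^'a \<Rightarrow> bool" where
  "pos_diag A \<longleftrightarrow> is_diag A \<and> (\<forall>i. A $ i $ i > 0)"

definition mp_pinv :: "real^'m^'k \<Rightarrow> real^'k^'m" where
  "mp_pinv A = (THE X. A ** X ** A = A \<and> X ** A ** X = X \<and>
       transpose (A ** X) = A ** X \<and> transpose (X ** A) = X ** A)"

definition strictly_convex :: "(real \<Rightarrow> real) \<Rightarrow> bool" where
  "strictly_convex f \<longleftrightarrow> (\<forall>x y t. x \<noteq> y \<and> 0 < t \<and> t < 1 \<longrightarrow>
      f ((1 - t) * x + t * y) < (1 - t) * f x + t * f y)"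

definition twice_differentiable :: "(real \<Rightarrow> real) \<Rightarrow> bool" where
  "twice_differentiable f \<longleftrightarrow> (\<exists>f'. (\<forall>x. (f has_real_derivative f' x) (at x)) \<and>
      (\<forall>x. f' differentiable (at x)))"

text \<open>H^T = [B C^T L^+ ; - B C^T L^+], a (2|E|) x n matrix with rows indexed by 'e + 'e.\<close>
definition HT_mat :: "('e \<Rightarrow> 'n) \<Rightarrow> ('e \<Rightarrow> 'n) \<Rightarrow> real^'e^'e \<Rightarrow> real^'n^('e + 'e)" where
  "HT_mat src tgt B =
     (let C = incidence src tgt; L = C ** B ** transpose C; M = B ** transpose C ** mp_pinv L
      in (\<chi> k. case k of Inl e \<Rightarrow> M $ e | Inr e \<Rightarrow> - (M $ e)))"

definition F_vec :: "real^'e \<Rightarrow> real^'e \<Rightarrow> real^('e + 'e)" where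
  "F_vec Fup Flow = (\<chi> k. case k of Inl e \<Rightarrow> Fup $ e | Inr e \<Rightarrow> - (Flow $ e))"

definition Lhat ::
  "('e \<Rightarrow> 'n) \<Rightarrow> ('e \<Rightarrow> 'n) \<Rightarrow> real^'e^'e \<Rightarrow> real^'n^'n \<Rightarrow> real^'e \<Rightarrow> real^'e \<Rightarrow> real^'n
   \<Rightarrow> ('n \<Rightarrow> real \<Rightarrow> real) \<Rightarrow> ((real^'n) \<times> (real^'e)) \<Rightarrow> (real \<times> (real^('e + 'e)) \<times> (real^'n)) \<Rightarrow> real" where
  "Lhat src tgt B D Fup Flow d J z \<sigma> =
     (case z of (p, th) \<Rightarrow> case \<sigma> of (lam, eta, nu) \<Rightarrow>
        (\<Sum>j\<in>UNIV. J j (p $ j))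
        - (1/2) * (nu \<bullet> (D *v nu))
        + nu \<bullet> (p - d - (incidence src tgt ** B) *v th)
        - lam * ((\<chi> j. 1) \<bullet> (p - d))
        + eta \<bullet> (HT_mat src tgt B *v (p - d) - F_vec Fup Flow))"

definition proj_plus :: "real^'a \<Rightarrow> real^'a \<Rightarrow> real^'a" where
  "proj_plus y u = (\<chi> j. if y $ j > 0 \<or> u $ j > 0 then y $ j else 0)"

definition proj_sigma :: "(real \<times> (real^'b) \<times> (real^'c)) \<Rightarrow> real^'b \<Rightarrow> (real \<times> (real^'b) \<times> (real^'c))" where
  "proj_sigma g eta = (case g of (gl, ge, gn) \<Rightarrow> (gl, proj_plus ge eta, gn))"

definition nonneg_vec :: "real^'a \<Rightarrow> bool" where
  "nonneg_vec v \<longleftrightarrow> (\<forall>i. v $ i \<ge> 0)"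

end

theory Submission
  imports Defs
begin


lemma strict_tangent:
  fixes f :: "real \<Rightarrow> real"
  assumes sc: "strictly_convex f" and d: "(f has_real_derivative D) (at x)" and ne: "y \<noteq> x"
  shows "f y - f x - D * (y - x) > 0"
proof -
  have cv: "convex_on UNIV f"
  proof (rule convex_onI)
    fix t u v :: real assume t: "0 < t" "t < 1"
    show "f ((1 - t) *\<^sub>R u + t *\<^sub>R v) \<le> (1 - t) * f u + t * f v"
    proof (cases "u = v")
      case True then show ?thesis by (simp add: algebra_simps)
    next
      case False then show ?thesis using sc t unfolding strictly_convex_def
        by (metis less_eq_real_def real_scaleR_def)
    qed
  qed simp
  define m where "m = (x + y) / 2"
  have m1: "f m < (f x + f y) / 2"
  proof -
    have "f ((1 - 1/2) * x + (1/2) * y) < (1 - 1/2) * f x + (1/2) * f y"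
    proof -
      have "\<forall>x y t. x \<noteq> y \<and> 0 < t \<and> t < 1 \<longrightarrow>
      f ((1 - t) * x + t * y) < (1 - t) * f x + t * f y" using sc unfolding strictly_convex_def .
      then have "x \<noteq> y \<and> 0 < (1/2::real) \<and> (1/2::real) < 1 \<longrightarrow>
      f ((1 - 1/2) * x + 1/2 * y) < (1 - 1/2) * f x + 1/2 * f y" by blast
      then show ?thesis using ne by auto
    qed
    then show ?thesis unfolding m_def by (simp add: field_simps)
  qed
  have "f m - f x \<ge> D * (m - x)"
    by (rule convex_on_imp_above_tangent[OF cv]) (use d in auto)
  then show ?thesis using m1 unfolding m_def by (auto simp: field_simps)
qed

lemma line_deriv:
  assumes "GDERIV f x :> g"
  shows "((\<lambda>r. f (x + r *\<^sub>R u)) has_real_derivative (g \<bullet> u)) (at 0)"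
proof -
  have l: "((\<lambda>r. x + r *\<^sub>R u) has_derivative (\<lambda>r. r *\<^sub>R u)) (at 0)"
    by (auto intro!: derivative_eq_intros)
  have "(f has_derivative (\<lambda>h. h \<bullet> g)) (at (x + 0 *\<^sub>R u))"
    using assms by (simp add: gderiv_def)
  from has_derivative_compose[OF l this]
  show ?thesis unfolding has_field_derivative_def
    by (simp add: inner_commute mult.commute o_def mult_commute_abs)
qed



lemma LL_z_shift:
  "Lhat src tgt B D Fup Flow d J ((p, th) + r *\<^sub>R (a, b)) (lam, eta, nu) =
   Lhat src tgt B D Fup Flow d J (p, th) (lam, eta, nu)
   + (\<Sum>j\<in>UNIV. J j (p$j + r * a$j) - J j (p$j))
   + r * (nu \<bullet> a - nu \<bullet> ((incidence src tgt ** B) *v b) - lam * ((\<chi> j. 1) \<bullet> a)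
          + eta \<bullet> (HT_mat src tgt B *v a))"
  unfolding Lhat_def
  by (simp add: algebra_simps inner_add_right inner_diff_right sum_subtractf)

lemma LL_s_shift:
  "Lhat src tgt B D Fup Flow d J (p, th) ((lam, eta, nu) + r *\<^sub>R (a, e, c)) =
   Lhat src tgt B D Fup Flow d J (p, th) (lam, eta, nu)
   + r * (-(1/2) * (nu \<bullet> (D *v c) + c \<bullet> (D *v nu)) + c \<bullet> (p - d - (incidence src tgt ** B) *v th)
          - a * ((\<chi> j. 1) \<bullet> (p - d)) + e \<bullet> (HT_mat src tgt B *v (p - d) - F_vec Fup Flow))
   - r^2/2 * (c \<bullet> (D *v c))"
  unfolding Lhat_def
  by (simp add: algebra_simps inner_add_right inner_add_left inner_diff_right power2_eq_square)



lemma LL_z_dir: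
  assumes g: "GDERIV (\<lambda>w. Lhat src tgt B D Fup Flow d J w (lam, eta, nu)) (p, th) :> g"
    and J': "\<And>j x. (J j has_real_derivative J' j x) (at x)"
  shows "g \<bullet> (a, b) = (\<Sum>j\<in>UNIV. J' j (p$j) * a$j)
   + (nu \<bullet> a - nu \<bullet> ((incidence src tgt ** B) *v b) - lam * ((\<chi> j. 1) \<bullet> a)
          + eta \<bullet> (HT_mat src tgt B *v a))"
proof -
  have d1: "((\<lambda>r. Lhat src tgt B D Fup Flow d J ((p, th) + r *\<^sub>R (a, b)) (lam, eta, nu))
      has_real_derivative (g \<bullet> (a, b))) (at 0)"
    using line_deriv[OF g] .
  have d2: "((\<lambda>r. Lhat src tgt B D Fup Flow d J ((p, th) + r *\<^sub>R (a, b)) (lam, eta, nu))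
      has_real_derivative ((\<Sum>j\<in>UNIV. J' j (p$j) * a$j)
   + (nu \<bullet> a - nu \<bullet> ((incidence src tgt ** B) *v b) - lam * ((\<chi> j. 1) \<bullet> a)
          + eta \<bullet> (HT_mat src tgt B *v a)))) (at 0)"
    unfolding LL_z_shift
    apply (rule derivative_eq_intros refl)+
        apply (rule DERIV_chain'[of _ _ _ _ "J _"])
         apply (rule derivative_eq_intros refl)+
        apply (rule J')
       apply (rule derivative_eq_intros refl)+
    apply simp
    done
  show ?thesis using DERIV_unique[OF d1 d2] .
qed

lemma LL_s_dir:
  assumes g: "GDERIV (\<lambda>w. Lhat src tgt B D Fup Flow d J (p, th) w) (lam, eta, nu) :> g"
  shows "g \<bullet> (a, e, c) = -(1/2) * (nu \<bullet> (D *v c) + c \<bullet> (D *v nu)) + c \<bullet> (p - d - (incidence src tgt ** B) *v th)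
          - a * ((\<chi> j. 1) \<bullet> (p - d)) + e \<bullet> (HT_mat src tgt B *v (p - d) - F_vec Fup Flow)"
proof -
  have d1: "((\<lambda>r. Lhat src tgt B D Fup Flow d J (p, th) ((lam, eta, nu) + r *\<^sub>R (a, e, c)))
      has_real_derivative (g \<bullet> (a, e, c))) (at 0)"
    using line_deriv[OF g] .
  have d2: "((\<lambda>r. Lhat src tgt B D Fup Flow d J (p, th) ((lam, eta, nu) + r *\<^sub>R (a, e, c)))
      has_real_derivative (-(1/2) * (nu \<bullet> (D *v c) + c \<bullet> (D *v nu)) + c \<bullet> (p - d - (incidence src tgt ** B) *v th)
          - a * ((\<chi> j. 1) \<bullet> (p - d)) + e \<bullet> (HT_mat src tgt B *v (p - d) - F_vec Fup Flow))) (at 0)"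
    unfolding LL_s_shift
    by (auto intro!: derivative_eq_intros)
  show ?thesis using DERIV_unique[OF d1 d2] .
qed

lemma LL_s_full:
  assumes g: "GDERIV (\<lambda>w. Lhat src tgt B D Fup Flow d J (p, th) w) (lam, eta, nu) :> g"
  shows "Lhat src tgt B D Fup Flow d J (p, th) ((lam, eta, nu) + (a, e, c)) =
   Lhat src tgt B D Fup Flow d J (p, th) (lam, eta, nu) + g \<bullet> (a, e, c) - (1/2) * (c \<bullet> (D *v c))"
  using LL_s_shift[where r=1 and p=p and th=th and a=a and e=e and c=c and lam=lam and eta=eta and nu=nu] LL_s_dir[OF g, of a e c]
  by simp

lemma LL_z_full:
  assumes g: "GDERIV (\<lambda>w. Lhat src tgt B D Fup Flow d J w (lam, eta, nu)) (p, th) :> g"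
    and J': "\<And>j x. (J j has_real_derivative J' j x) (at x)"
  shows "Lhat src tgt B D Fup Flow d J ((p, th) + (a, b)) (lam, eta, nu) =
   Lhat src tgt B D Fup Flow d J (p, th) (lam, eta, nu) + g \<bullet> (a, b)
   + (\<Sum>j\<in>UNIV. J j (p$j + a$j) - J j (p$j) - J' j (p$j) * a$j)"
  using LL_z_shift[where r=1 and p=p and th=th and a=a and b=b and J=J] LL_z_dir[OF g J', of a b]
  by (simp add: sum_subtractf)



lemma nonneg_invariant:
  fixes f f' :: "real \<Rightarrow> real"
  assumes d: "\<And>t. t \<ge> 0 \<Longrightarrow> (f has_real_derivative f' t) (at t within {0..})"
    and pos: "\<And>t. t \<ge> 0 \<Longrightarrow> f t < 0 \<Longrightarrow> f' t \<ge> 0"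
    and f0: "f 0 \<ge> 0" and t: "t \<ge> 0"
  shows "f t \<ge> 0"
proof (rule ccontr)
  assume "\<not> f t \<ge> 0"
  hence ft: "f t < 0" by simp
  have cont: "continuous_on {0..} f"
    using d by (metis atLeast_iff continuous_on_eq_continuous_within DERIV_continuous)
  have c1: "continuous_on {0..t} f" using continuous_on_subset[OF cont] by auto
  let ?S = "{0..t} \<inter> f -` {0..}"
  have "closed ?S" by (rule continuous_closed_preimage[OF c1]) auto
  hence "compact ?S" by (meson bounded_Int bounded_closed_interval compact_eq_bounded_closed)
  moreover have "0 \<in> ?S" using f0 t by auto
  ultimately obtain t0 where t0: "t0 \<in> ?S" and mx: "\<forall>y\<in>?S. y \<le> t0"
    using compact_attains_sup by blast
  have t0t: "t0 \<le> t" "0 \<le> t0" "f t0 \<ge> 0" using t0 by auto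
  have "f t0 \<le> f t"
  proof (rule DERIV_nonneg_imp_increasing_open[OF t0t(1)])
    fix x assume x: "t0 < x" "x < t"
    have "x \<notin> ?S" using mx x by force
    hence fx: "f x < 0" using x t0t by auto
    have "(f has_real_derivative f' x) (at x within {0..})" using d x t0t by auto
    moreover have "at x within {0..} = at x"
      by (rule at_within_open_subset[of x "{0<..}"]) (use x t0t in auto)
    ultimately have "(f has_real_derivative f' x) (at x)" by simp
    then show "\<exists>y. (f has_real_derivative y) (at x) \<and> 0 \<le> y"
      using pos[of x] fx x t0t by auto
  next
    show "continuous_on {t0..t} f" using continuous_on_subset[OF cont] t0t by auto
  qed
  then show False using ft t0t by auto
qed



lemma const_deriv_zero:
  fixes f :: "real \<Rightarrow> 'a::real_normed_vector"
  assumes d: "(f has_vector_derivative f') (at t within {0..})" and t: "t \<ge> 0"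
    and c: "\<And>\<tau>. \<tau> \<ge> 0 \<Longrightarrow> f \<tau> = k"
  shows "f' = 0"
proof -
  have d0: "((\<lambda>_. k) has_vector_derivative 0) (at t within {0..})" by (rule derivative_intros)
  have d1: "(f has_vector_derivative 0) (at t within {0..})"
    by (rule has_vector_derivative_transform[OF _ _ d0]) (use t c in auto)
  have nb: "at t within {0..} \<noteq> bot"
  proof -
    have "t islimpt {0..}"
      unfolding islimpt_approachable
    proof (intro allI impI)
      fix e :: real assume "e > 0"
      then show "\<exists>x'\<in>{0..}. x' \<noteq> t \<and> dist x' t < e"
        using t by (intro bexI[of _ "t + e/2"]) (auto simp: dist_real_def)
    qed
    then show ?thesis using trivial_limit_within by blast
  qed
  show ?thesis using vector_derivative_unique_within[OF nb d d1] .
qed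

lemma diag_mult:
  assumes "pos_diag A"
  shows "(A *v x) $ i = A$i$i * x$i"
proof -
  have "(A *v x) $ i = (\<Sum>k\<in>UNIV. A$i$k * x$k)" by (simp add: matrix_vector_mult_def)
  also have "\<dots> = (\<Sum>k\<in>UNIV. if k = i then A$i$i * x$i else 0)"
    using assms unfolding pos_diag_def is_diag_def by (intro sum.cong) auto
  also have "\<dots> = A$i$i * x$i" by simp
  finally show ?thesis .
qed

lemma quad_diag:
  assumes "pos_diag A"
  shows "c \<bullet> (A *v c) = (\<Sum>j\<in>UNIV. A$j$j * (c$j)^2)"
  unfolding inner_vec_def using diag_mult[OF assms]
  by (simp add: power2_eq_square mult_ac)

lemma quad_diag_zero:
  assumes "pos_diag A" "c \<bullet> (A *v c) \<le> 0"
  shows "c = 0"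
proof -
  have nn: "\<forall>j\<in>UNIV. A$j$j * (c$j)^2 \<ge> 0" using assms(1) unfolding pos_diag_def
    by (simp add: less_imp_le)
  have "(\<Sum>j\<in>UNIV. A$j$j * (c$j)^2) = 0"
  proof -
    have "0 \<le> (\<Sum>j\<in>UNIV. A$j$j * (c$j)^2)" using nn by (simp add: sum_nonneg)
    then show ?thesis using assms quad_diag[OF assms(1), of c] by linarith
  qed
  hence "\<forall>j. A$j$j * (c$j)^2 = 0" using sum_nonneg_eq_0_iff[where f="\<lambda>j. A$j$j * (c$j)^2" and A=UNIV] nn by simp
  then show ?thesis using assms(1) unfolding pos_diag_def by (auto simp: vec_eq_iff) (metis less_irrefl)
qed

lemma diag_zero:
  assumes "pos_diag A" "A *v x = 0"
  shows "x = 0"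
  using assms diag_mult[OF assms(1)] unfolding pos_diag_def
  by (metis vec_eq_iff zero_index mult_eq_0_iff less_irrefl)



theorem proposition1:
  fixes src tgt :: "'e::finite \<Rightarrow> 'n::finite"
    and B :: "real^'e^'e" and D :: "real^'n^'n"
    and Fup Flow :: "real^'e" and d :: "real^'n"
    and J :: "'n \<Rightarrow> real \<Rightarrow> real"
    and Tp :: "real^'n^'n" and Tth :: "real^'e^'e"
    and Tl :: real and Te :: "real^('e + 'e)^('e + 'e)" and Tn :: "real^'n^'n"
    and zs :: "(real^'n) \<times> (real^'e)" and ss :: "real \<times> (real^('e + 'e)) \<times> (real^'n)"
    and z z' :: "real \<Rightarrow> (real^'n) \<times> (real^'e)"
    and s s' :: "real \<Rightarrow> real \<times> (real^('e + 'e)) \<times> (real^'n)"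
  defines "LL \<equiv> Lhat src tgt B D Fup Flow d J"
    and "TZ \<equiv> (\<lambda>(a, b). (Tp *v a, Tth *v b))"
    and "TS \<equiv> (\<lambda>(l, e, v). (Tl * l, Te *v e, Tn *v v))"
  assumes graph: "simple_digraph src tgt" "connected_digraph src tgt"
    and B_pos: "pos_diag B" and D_pos: "pos_diag D"
    and J_conv: "\<And>j. strictly_convex (J j)" and J_diff: "\<And>j. twice_differentiable (J j)"
    and T_pos: "pos_diag Tp" "pos_diag Tth" "Tl > 0" "pos_diag Te" "pos_diag Tn"
    and eq_z: "GDERIV (\<lambda>w. LL w ss) zs :> 0"
    and eq_s: "\<exists>g. GDERIV (\<lambda>w. LL zs w) ss :> g \<and> proj_sigma g (fst (snd ss)) = 0"
    and eq_eta: "nonneg_vec (fst (snd ss))"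
    and z_deriv: "\<And>t. t \<ge> 0 \<Longrightarrow> (z has_vector_derivative z' t) (at t within {0..})"
    and s_deriv: "\<And>t. t \<ge> 0 \<Longrightarrow> (s has_vector_derivative s' t) (at t within {0..})"
    and z_ode: "\<And>t. t \<ge> 0 \<Longrightarrow> GDERIV (\<lambda>w. LL w (s t)) (z t) :> - TZ (z' t)"
    and s_ode: "\<And>t. t \<ge> 0 \<Longrightarrow>
        \<exists>g. GDERIV (\<lambda>w. LL (z t) w) (s t) :> g \<and> TS (s' t) = proj_sigma g (fst (snd (s t)))"
    and eta0: "nonneg_vec (fst (snd (s 0)))"
    and const1: "\<And>t. t \<ge> 0 \<Longrightarrow> LL zs (s t) = LL zs ss"
    and const2: "\<And>t. t \<ge> 0 \<Longrightarrow> LL (z t) ss = LL zs ss"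
  shows "\<forall>t \<ge> 0. z' t = 0 \<and> s' t = 0"
proof -
  let ?M = "incidence src tgt ** B"
  let ?H = "HT_mat src tgt B"
  let ?F = "F_vec Fup Flow"
  let ?one = "(\<chi> j. 1) :: real^'n"
  let ?L = "Lhat src tgt B D Fup Flow d J"
  obtain J' where J': "\<And>j x. (J j has_real_derivative J' j x) (at x)"
    using J_diff unfolding twice_differentiable_def by metis
  obtain ps ths where zs: "zs = (ps, ths)" by (cases zs)
  obtain ls es ns where ss: "ss = (ls, es, ns)" by (cases ss) auto
  obtain g where g: "GDERIV (\<lambda>w. ?L (ps, ths) w) (ls, es, ns) :> g"
      and pg: "proj_sigma g es = 0"
    using eq_s unfolding LL_def zs ss by auto
  obtain gl ge gn where gsplit: "g = (gl, ge, gn)" by (cases g) auto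
  have gl0: "gl = 0" and gn0: "gn = 0" and pge: "proj_plus ge es = 0"
    using pg unfolding gsplit proj_sigma_def by (auto simp: zero_prod_def)
  have es_nn: "\<And>j. es $ j \<ge> 0" using eq_eta unfolding ss nonneg_vec_def by auto
  have ge_np: "\<And>j. ge $ j \<le> 0" and ge_es: "\<And>j. ge $ j * es $ j = 0"
  proof -
    fix j
    have "proj_plus ge es $ j = 0" using pge by simp
    hence "(if ge $ j > 0 \<or> es $ j > 0 then ge $ j else 0) = 0"
      unfolding proj_plus_def by simp
    then show "ge $ j \<le> 0" "ge $ j * es $ j = 0" using es_nn[of j]
      by (cases "ge $ j > 0 \<or> es $ j > 0"; simp)+
  qed
  have gz: "GDERIV (\<lambda>w. ?L w (ls, es, ns)) (ps, ths) :> 0"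
    using eq_z unfolding LL_def zs ss .
  have nsM: "\<And>b. ns \<bullet> (?M *v b) = 0"
    using LL_z_dir[OF gz J', of 0] by simp
  have eta_nn: "\<And>t j. t \<ge> 0 \<Longrightarrow> fst (snd (s t)) $ j \<ge> 0"
  proof -
    fix t j assume t: "(t::real) \<ge> 0"
    show "fst (snd (s t)) $ j \<ge> 0"
    proof (rule nonneg_invariant[where f="\<lambda>t. fst (snd (s t)) $ j"
          and f'="\<lambda>t. fst (snd (s' t)) $ j", OF _ _ _ t])
      fix \<tau> :: real assume \<tau>: "\<tau> \<ge> 0"
      have bl: "bounded_linear (\<lambda>x::real \<times> (real^('e+'e)) \<times> (real^'n). fst (snd x) $ j)"
        by (intro bounded_linear_compose[OF bounded_linear_vec_nth]
             bounded_linear_compose[OF bounded_linear_fst] bounded_linear_snd)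
      show "((\<lambda>t. fst (snd (s t)) $ j) has_real_derivative fst (snd (s' \<tau>)) $ j) (at \<tau> within {0..})"
        unfolding has_real_derivative_iff_has_vector_derivative
        using bounded_linear.has_vector_derivative[OF bl s_deriv[OF \<tau>]] .
    next
      fix \<tau> :: real assume \<tau>: "\<tau> \<ge> 0" and neg: "fst (snd (s \<tau>)) $ j < 0"
      obtain gt where gt: "TS (s' \<tau>) = proj_sigma gt (fst (snd (s \<tau>)))"
        using s_ode[OF \<tau>] by auto
      have "Te *v fst (snd (s' \<tau>)) = proj_plus (fst (snd gt)) (fst (snd (s \<tau>)))"
        using gt unfolding TS_def proj_sigma_def by (auto split: prod.splits)
      hence "(Te *v fst (snd (s' \<tau>))) $ j = proj_plus (fst (snd gt)) (fst (snd (s \<tau>))) $ j"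
        by simp
      hence "Te$j$j * fst (snd (s' \<tau>)) $ j = (if fst (snd gt) $ j > 0 \<or> fst (snd (s \<tau>)) $ j > 0
             then fst (snd gt) $ j else 0)"
        unfolding diag_mult[OF T_pos(4)] proj_plus_def by simp
      hence "Te$j$j * fst (snd (s' \<tau>)) $ j \<ge> 0" using neg by auto
      moreover have "Te$j$j > 0" using T_pos(4) unfolding pos_diag_def by auto
      ultimately show "fst (snd (s' \<tau>)) $ j \<ge> 0" by (simp add: zero_le_mult_iff)
    next
      show "fst (snd (s 0)) $ j \<ge> 0" using eta0 unfolding nonneg_vec_def by auto
    qed
  qed
  have nu_c: "snd (snd (s t)) = ns \<and> (\<forall>j. ge $ j * fst (snd (s t)) $ j = 0)" if t: "t \<ge> 0" for t
  proof -
    obtain lt et nt where st: "s t = (lt, et, nt)" by (cases "s t") auto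
    have et_nn: "\<And>j. et $ j \<ge> 0" using eta_nn[OF t] st by auto
    have "?L (ps, ths) ((ls, es, ns) + (lt - ls, et - es, nt - ns)) =
       ?L (ps, ths) (ls, es, ns) + g \<bullet> (lt - ls, et - es, nt - ns) - (1/2) * ((nt - ns) \<bullet> (D *v (nt - ns)))"
      by (rule LL_s_full[OF g])
    moreover have "(ls, es, ns) + (lt - ls, et - es, nt - ns) = s t" using st by simp
    moreover have "?L (ps, ths) (s t) = ?L (ps, ths) (ls, es, ns)"
      using const1[OF t] unfolding LL_def zs ss .
    ultimately have eq: "g \<bullet> (lt - ls, et - es, nt - ns) = (1/2) * ((nt - ns) \<bullet> (D *v (nt - ns)))"
      by simp
    have "g \<bullet> (lt - ls, et - es, nt - ns) = ge \<bullet> (et - es)" using gl0 gn0 gsplit by simp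
    also have "\<dots> = (\<Sum>j\<in>UNIV. ge $ j * et $ j)"
    proof -
      have "(\<Sum>j\<in>UNIV. ge $ j * es $ j) = 0" using ge_es by (simp only: sum.neutral_const)
      then show ?thesis unfolding inner_vec_def
        by (simp add: right_diff_distrib sum_subtractf mult.commute)
    qed
    finally have gi: "g \<bullet> (lt - ls, et - es, nt - ns) = (\<Sum>j\<in>UNIV. ge $ j * et $ j)" .
    have np: "\<forall>j\<in>UNIV. - (ge $ j * et $ j) \<ge> 0" using ge_np et_nn
      by (simp add: mult_nonpos_nonneg)
    have s0: "0 \<le> (\<Sum>j\<in>UNIV. - (ge $ j * et $ j))" using np by (simp add: sum_nonneg)
    have qn: "0 \<le> (nt - ns) \<bullet> (D *v (nt - ns))"
      unfolding quad_diag[OF D_pos] using D_pos unfolding pos_diag_def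
      by (simp add: sum_nonneg less_imp_le)
    have q0: "(nt - ns) \<bullet> (D *v (nt - ns)) \<le> 0" using eq gi s0 qn by (simp add: sum_negf)
    have "nt - ns = 0" using quad_diag_zero[OF D_pos q0] .
    moreover have "(\<Sum>j\<in>UNIV. - (ge $ j * et $ j)) = 0" using eq gi s0 q0 qn by (simp add: sum_negf)
    hence "\<forall>j. - (ge $ j * et $ j) = 0"
      using sum_nonneg_eq_0_iff[where f="\<lambda>j. - (ge $ j * et $ j)" and A=UNIV] np by simp
    ultimately show ?thesis using st by simp
  qed
  have p_c: "fst (z t) = ps" if t: "t \<ge> 0" for t
  proof -
    obtain pt tht where zt: "z t = (pt, tht)" by (cases "z t")
    have "?L ((ps, ths) + (pt - ps, tht - ths)) (ls, es, ns) =
       ?L (ps, ths) (ls, es, ns) + 0 \<bullet> (pt - ps, tht - ths)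
       + (\<Sum>j\<in>UNIV. J j (ps$j + (pt - ps)$j) - J j (ps$j) - J' j (ps$j) * (pt - ps)$j)"
      by (rule LL_z_full[OF gz J'])
    moreover have "(ps, ths) + (pt - ps, tht - ths) = z t" using zt by simp
    moreover have "?L (z t) (ls, es, ns) = ?L (ps, ths) (ls, es, ns)"
      using const2[OF t] unfolding LL_def zs ss .
    ultimately have s0: "(\<Sum>j\<in>UNIV. J j (pt$j) - J j (ps$j) - J' j (ps$j) * (pt$j - ps$j)) = 0"
      by simp
    have nn: "\<forall>j\<in>UNIV. J j (pt$j) - J j (ps$j) - J' j (ps$j) * (pt$j - ps$j) \<ge> 0"
    proof
      fix j :: 'n
      show "J j (pt$j) - J j (ps$j) - J' j (ps$j) * (pt$j - ps$j) \<ge> 0"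
        using strict_tangent[OF J_conv[of j] J'[of j "ps$j"], of "pt$j"] by (cases "pt$j = ps$j") auto
    qed
    have "\<forall>j. J j (pt$j) - J j (ps$j) - J' j (ps$j) * (pt$j - ps$j) = 0"
      using sum_nonneg_eq_0_iff[where f="\<lambda>j. J j (pt$j) - J j (ps$j) - J' j (ps$j) * (pt$j - ps$j)" and A=UNIV] nn s0 by simp
    hence z0: "\<And>j. J j (pt$j) - J j (ps$j) - J' j (ps$j) * (pt$j - ps$j) = 0" by blast
    have "\<forall>j. pt$j = ps$j"
    proof (rule allI, rule ccontr)
      fix j assume "pt$j \<noteq> ps$j"
      from strict_tangent[OF J_conv[of j] J'[of j "ps$j"] this] z0[of j] show False by simp
    qed
    then show ?thesis using zt by (simp add: vec_eq_iff)
  qed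
  show ?thesis
  proof (intro allI impI)
    fix t :: real assume t: "t \<ge> 0"
    obtain pt tht where zt: "z t = (pt, tht)" by (cases "z t")
    obtain lt et nt where st: "s t = (lt, et, nt)" by (cases "s t") auto
    obtain pt' tht' where zt': "z' t = (pt', tht')" by (cases "z' t")
    obtain lt' et' nt' where st': "s' t = (lt', et', nt')" by (cases "s' t") auto
    have ptc: "pt = ps" using p_c[OF t] zt by simp
    have ntc: "nt = ns" and comp: "\<And>j. ge $ j * et $ j = 0" using nu_c[OF t] st by auto
    have "pt' = 0"
    proof -
      have "((\<lambda>\<tau>. fst (z \<tau>)) has_vector_derivative fst (z' t)) (at t within {0..})"
        by (rule bounded_linear.has_vector_derivative[OF bounded_linear_fst z_deriv[OF t]])
      from const_deriv_zero[OF this t p_c] show ?thesis using zt' by simp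
    qed
    have "nt' = 0"
    proof -
      have bl: "bounded_linear (\<lambda>x::real \<times> (real^('e+'e)) \<times> (real^'n). snd (snd x))"
        by (intro bounded_linear_compose[OF bounded_linear_snd] bounded_linear_snd)
      have "((\<lambda>\<tau>. snd (snd (s \<tau>))) has_vector_derivative snd (snd (s' t))) (at t within {0..})"
        by (rule bounded_linear.has_vector_derivative[OF bl s_deriv[OF t]])
      from const_deriv_zero[OF this t] nu_c show ?thesis using st' by simp
    qed
    have "tht' = 0"
    proof -
      have gzt: "GDERIV (\<lambda>w. ?L w (lt, et, ns)) (ps, tht) :> - TZ (z' t)"
        using z_ode[OF t] unfolding LL_def zt st ptc ntc .
      have "- TZ (z' t) \<bullet> (0, tht') = 0"
        using LL_z_dir[OF gzt J', of 0 tht'] nsM by simp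
      hence "tht' \<bullet> (Tth *v tht') \<le> 0" unfolding TZ_def zt' by (simp add: inner_commute)
      from quad_diag_zero[OF T_pos(2) this] show ?thesis .
    qed
    obtain gt where gt: "GDERIV (\<lambda>w. ?L (z t) w) (s t) :> gt"
        and gtp: "TS (s' t) = proj_sigma gt (fst (snd (s t)))"
      using s_ode[OF t] unfolding LL_def by auto
    obtain gtl gte gtn where gts: "gt = (gtl, gte, gtn)" by (cases gt) auto
    have gt': "GDERIV (\<lambda>w. ?L (ps, tht) w) (lt, et, ns) :> gt"
      using gt unfolding zt st ptc ntc .
    have "gt \<bullet> (1, 0, 0) = g \<bullet> (1, 0, 0)"
      using LL_s_dir[OF gt', of 1 0 0] LL_s_dir[OF g, of 1 0 0] by simp
    hence gtl0: "gtl = 0" using gts gsplit gl0 by simp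
    have "gt \<bullet> (0, v, 0) = g \<bullet> (0, v, 0)" for v
      using LL_s_dir[OF gt', of 0 v 0] LL_s_dir[OF g, of 0 v 0] by simp
    hence "gte \<bullet> v = ge \<bullet> v" for v using gts gsplit by simp
    hence "(gte - ge) \<bullet> (gte - ge) = 0" by (simp add: inner_diff_left)
    hence gte: "gte = ge" by simp
    have TSe: "Tl * lt' = gtl" "Te *v et' = proj_plus gte et"
      using gtp unfolding TS_def st' st gts proj_sigma_def by auto
    have "lt' = 0" using TSe(1) gtl0 T_pos(3) by simp
    have "proj_plus ge et = 0"
    proof -
      have "(if ge $ j > 0 \<or> et $ j > 0 then ge $ j else 0) = 0" for j
        using ge_np[of j] comp[of j] by (cases "et $ j > 0") auto
      then show ?thesis unfolding proj_plus_def by (simp add: vec_eq_iff)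
    qed
    hence "et' = 0" using diag_zero[OF T_pos(4)] TSe(2) gte by simp
    show "z' t = 0 \<and> s' t = 0"
      using zt' st' \<open>pt' = 0\<close> \<open>tht' = 0\<close> \<open>lt' = 0\<close> \<open>et' = 0\<close> \<open>nt' = 0\<close>
      by (simp add: zero_prod_def)
  qed
qed
end
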